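(* Let $G$ be a primitive strongly regular graph with parameters $(v,k,\lambda,\mu)$, and let $s$ be its smallest adjacency eigenvalue. Then $k/|s| > v^{1/6}/2$.
   Context: A graph is strongly regular with parameters $(v,k,\lambda,\mu)$ if it is a $k$-regular graph on $v$ vertices such that each edge lies in exactly $\lambda$ triangles and any two distinct non-adjacent vertices have exactly $\mu$ common neighbours; complete and edgeless graphs are excluded. A strongly regular graph is primitive if both it and its complement are connected. A connected strongly regular graph has, besides $k$, exactly two distinct adjacency eigenvalues $r>0$ and $s<-1$. *)

theory Defs
  imports "HOL-Analysis.Analysis"
begin

definition simple_graph :: "('n \<Rightarrow> 'n \<Rightarrow> bool) \<Rightarrow> bool" where
  "simple_graph E \<longleftrightarrow> (\<forall>x y. E x y \<longrightarrow> E y x) \<and> (\<forall>x. \<not> E x x)"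

definition nbrs :: "('n \<Rightarrow> 'n \<Rightarrow> bool) \<Rightarrow> 'n \<Rightarrow> 'n set" where
  "nbrs E x = {y. E x y}"

text \<open>Strongly regular with parameters (v,k,lambda,mu); complete and edgeless graphs excluded.\<close>
definition strongly_regular ::
  "('n::finite \<Rightarrow> 'n \<Rightarrow> bool) \<Rightarrow> nat \<Rightarrow> nat \<Rightarrow> nat \<Rightarrow> nat \<Rightarrow> bool" where
  "strongly_regular E v k l m \<longleftrightarrow>
     simple_graph E \<and> CARD('n) = v \<and>
     (\<forall>x. card (nbrs E x) = k) \<and>
     (\<forall>x y. E x y \<longrightarrow> card (nbrs E x \<inter> nbrs E y) = l) \<and>
     (\<forall>x y. x \<noteq> y \<and> \<not> E x y \<longrightarrow> card (nbrs E x \<inter> nbrs E y) = m) \<and>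
     (\<exists>x y. E x y) \<and> (\<exists>x y. x \<noteq> y \<and> \<not> E x y)"

definition connected_graph :: "('n \<Rightarrow> 'n \<Rightarrow> bool) \<Rightarrow> bool" where
  "connected_graph E \<longleftrightarrow> (\<forall>x y. E\<^sup>*\<^sup>* x y)"

definition complement_graph :: "('n \<Rightarrow> 'n \<Rightarrow> bool) \<Rightarrow> 'n \<Rightarrow> 'n \<Rightarrow> bool" where
  "complement_graph E x y \<longleftrightarrow> x \<noteq> y \<and> \<not> E x y"

definition primitive_srg ::
  "('n::finite \<Rightarrow> 'n \<Rightarrow> bool) \<Rightarrow> nat \<Rightarrow> nat \<Rightarrow> nat \<Rightarrow> nat \<Rightarrow> bool" where
  "primitive_srg E v k l m \<longleftrightarrow> strongly_regular E v k l m \<and>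
     connected_graph E \<and> connected_graph (complement_graph E)"

definition adj_matrix :: "('n::finite \<Rightarrow> 'n \<Rightarrow> bool) \<Rightarrow> real^'n^'n" where
  "adj_matrix E = (\<chi> i j. if E i j then 1 else 0)"

definition is_eigenvalue :: "real^'n^'n \<Rightarrow> real \<Rightarrow> bool" where
  "is_eigenvalue A t \<longleftrightarrow> (\<exists>x. x \<noteq> 0 \<and> A *v x = t *\<^sub>R x)"

definition smallest_eigenvalue :: "real^'n^'n \<Rightarrow> real \<Rightarrow> bool" where
  "smallest_eigenvalue A s \<longleftrightarrow> is_eigenvalue A s \<and> (\<forall>t. is_eigenvalue A t \<longrightarrow> s \<le> t)"

end

theory Submission
  imports Defs
begin


lemma final_ineq:
  fixes k v l m x r g :: real
  assumes k1: "k \<ge> 1" and m1: "m \<ge> 1" and l0: "l \<ge> 0" and x0: "x > 0" and r0: "r > 0"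
    and rx: "r * x = k - m" and rmx: "r - x = l - m"
    and cnt: "k^2 = k + l * k + m * (v - 1 - k)"
    and gdef: "g * (r+x) = k + (v-1) * r" and vg: "v \<le> g^2 + g + 1"
    and vk: "v \<ge> k + 2" and vint: "v \<ge> 6 * k + 2 \<or> v \<le> 6 * k + 1"
  shows "64 * k^6 > v * x^6"
proof -
  have kl: "k - 1 - l = (r+1) * (x-1)" using rx rmx by (simp add: algebra_simps)
  have cnt2: "m * (v-1-k) = k * (k-1-l)" using cnt by (simp add: algebra_simps power2_eq_square)
  have "m * (v-1-k) \<ge> 0" using m1 vk by simp
  hence "k * (k-1-l) \<ge> 0" using cnt2 by simp
  hence kl0: "k-1-l \<ge> 0" using k1 by (simp add: zero_le_mult_iff)
  hence x1: "x \<ge> 1" using kl r0 by (simp add: zero_le_mult_iff)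
  have xk: "x \<le> k"
  proof -
    have "k - r * x + r - x \<ge> 0" using l0 rx rmx by linarith
    hence "x - k \<le> r * (1-x)" by (simp add: algebra_simps)
    moreover have "r * (1-x) \<le> 0" using r0 x1 by (simp add: mult_nonneg_nonpos)
    ultimately show ?thesis by linarith
  qed
  have "(v-1) * r \<ge> 1 * r" using vk k1 r0 by (intro mult_right_mono) auto
  hence "g * (r+x) \<ge> 1 * (r+x)" using gdef xk by simp
  hence g1: "g \<ge> 1" using r0 x0 by (simp add: mult_le_cancel_right)
  have "v \<le> (g+1)^2" using vg g1 by (simp add: power2_eq_square algebra_simps)
  also have "\<dots> \<le> (2 * g)^2" using g1 by (intro power_mono) auto
  finally have v4g: "v \<le> 4 * g^2" by simp
  have vg1: "v \<le> (g+1)^2" using vg g1 by (simp add: power2_eq_square algebra_simps)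
  show ?thesis
  proof (cases "x^2 \<le> 2 * k")
    case True
    have "m * (v-1-k) \<le> 1 * (k * (k-1))"
    proof -
      have "k * (k-1-l) \<le> k * (k-1)" using k1 l0 by (simp add: mult_left_mono)
      thus ?thesis using cnt2 by simp
    qed
    moreover have "1 * (v-1-k) \<le> m * (v-1-k)" using m1 vk by (intro mult_right_mono) auto
    ultimately have v1: "v \<le> k^2 + 1" by (simp add: power2_eq_square algebra_simps)
    have "x^6 = (x^2)^3" by (simp add: power_mult[symmetric])
    also have "\<dots> \<le> (2 * k)^3" using True x0 by (intro power_mono) auto
    finally have x6: "x^6 \<le> 8 * k^3" by simp
    have "v * x^6 \<le> (k^2+1) * (8 * k^3)" using v1 x6 vk k1
      by (intro mult_mono) auto
    also have "\<dots> < 64 * k^6"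
    proof -
      have "k^2 \<le> k^3" using k1 by (simp add: power_increasing)
      moreover have "1 \<le> k^3" using k1 by simp
      ultimately have "k^2 + 1 < 8 * k^3" by linarith
      hence "(k^2 + 1) * (8 * k^3) < (8 * k^3) * (8 * k^3)" using k1 by (intro mult_strict_right_mono) auto
      thus ?thesis by (simp add: power_add[symmetric])
    qed
    finally show ?thesis .
  next
    case False
    hence x2: "x^2 > 2 * k" by simp
    have "r * x < x * x/2" using rx m1 x2 by (simp add: power2_eq_square)
    hence rlt: "r < x/2" using x0 by (simp add: mult.commute)
    have mx: "m > x/2" using l0 rmx rlt by linarith
    have "m * (v-1-k) = k * (r+1) * (x-1)" using cnt2 kl by simp
    also have "\<dots> < k * (r+1) * x" using k1 r0 by simp
    also have "\<dots> \<le> k * (r+1) * (2 * m)" using k1 r0 mx by (intro mult_left_mono) auto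
    finally have "m * (v-1-k) < m * (2 * k * (r+1))" by (simp add: algebra_simps)
    hence vbnd: "v - 1 - k < 2 * k * (r+1)" using m1 by simp
    show ?thesis
    proof (cases "v \<ge> 6 * k+2")
      case True
      have "x * (v - 3 * k - 1) < x * (2 * k * r)" using vbnd x0 by (intro mult_strict_left_mono) (auto simp: algebra_simps)
      also have "\<dots> = 2 * k * (r * x)" by simp
      also have "\<dots> \<le> 2 * k * k" using rx m1 k1 by (intro mult_left_mono) auto
      finally have "x * (v - 3 * k - 1) < 2 * k * k" .
      moreover have "x * (v/2) \<le> x * (v - 3 * k - 1)" using True x0 by (intro mult_left_mono) auto
      ultimately have xv: "x* v < 4 * k^2" by (simp add: power2_eq_square)
      show ?thesis
      proof (cases "v^5 \<ge> 64 * k^6")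
        case True
        have "(x* v)^6 < (4 * k^2)^6" using xv x0 vk k1 by (intro power_strict_mono) auto
        hence "v^5 * (v * x^6) < (64 * k^6) * (64 * k^6)" by (simp add: power_mult_distrib eval_nat_numeral algebra_simps)
        also have "\<dots> \<le> v^5 * (64 * k^6)" using True k1 by (intro mult_right_mono) auto
        finally show ?thesis using vk k1 by (simp add: mult_less_cancel_left)
      next
        case False
        have G: "g * x^2 * (r+x) \<le> v * k * (r+x)"
        proof -
          have iden: "(r+x) * (v * k - k^2) = ((v-1) * x - k) * r^2 + (k + (v-1) * r) * x^2"
          proof -
            have "v * k - k^2 = (v-1) * (r * x) + k * (x - r)" using cnt rx rmx
              by algebra
            thus ?thesis by algebra
          qed
          have "(v-1) * x \<ge> k * 1" using x1 vk k1 by (intro mult_mono) auto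
          hence "((v-1) * x - k) * r^2 \<ge> 0" by simp
          moreover have "g * x^2 * (r+x) = (k + (v-1) * r) * x^2" using gdef by (metis mult.commute mult.left_commute)
          ultimately have "g * x^2 * (r+x) \<le> (r+x) * (v * k - k^2)" using iden by linarith
          also have "\<dots> \<le> (r+x) * (v * k)" using r0 x0 by (intro mult_left_mono) auto
          finally show ?thesis by (simp add: algebra_simps)
        qed
        hence G2: "g * x^2 \<le> v * k" using r0 x0 by (simp add: mult_le_cancel_right)
        have "(g * x^2)^3 \<le> (v * k)^3" using G2 g1 by (intro power_mono) auto
        hence G3: "g^3 * x^6 \<le> v^3 * k^3" by (simp add: power_mult_distrib power_mult[symmetric])
        have "(v * x^6)^2 * g^6 = v^2 * (g^3 * x^6)^2" by (simp add: power_mult_distrib power_mult[symmetric] algebra_simps)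
        also have "\<dots> \<le> v^2 * (v^3 * k^3)^2" using G3 g1 x0
          by (intro mult_left_mono power_mono) auto
        also have "\<dots> = v^3 * v^5 * k^6" by (simp add: power_mult_distrib power_mult[symmetric] algebra_simps)
        also have "\<dots> < v^3 * (64 * k^6) * k^6" using False vk k1 by (intro mult_strict_right_mono mult_strict_left_mono) auto
        also have "\<dots> \<le> (4 * g^2)^3 * (64 * k^6) * k^6" using v4g vk k1
          by (intro mult_right_mono power_mono) auto
        also have "\<dots> = (64 * k^6)^2 * g^6" by (simp add: power_mult_distrib power_mult[symmetric] algebra_simps)
        finally have "(v * x^6)^2 < (64 * k^6)^2" using g1 by (simp add: mult_less_cancel_right)
        thus ?thesis by (rule power_less_imp_less_base) (use k1 in auto)
      qed
    next
      case False
      hence False: "v - 1 \<le> 6 * k" using vint by linarith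
      have "g * x < g * (r+x)" using g1 r0 by simp
      moreover have "(v-1) * r \<le> (6 * k) * r" using False r0 by (intro mult_right_mono) auto
      ultimately have "g * x < k + 6 * k * r" using gdef by linarith
      hence "g * x * x < (k + 6 * k * r) * x" using x0 by (intro mult_strict_right_mono) auto
      also have "\<dots> = k * x + 6 * k * (r * x)" by (simp add: algebra_simps)
      also have "\<dots> \<le> k * k + 6 * k * k" using rx m1 k1 xk by (intro add_mono mult_left_mono) auto
      finally have A: "g * x * x < 7 * (k * k)" by simp
      have B: "x * x \<le> k * k" using xk x0 by (intro mult_mono) auto
      have C: "(g+1) * x^2 = g * x * x + x * x" by (simp add: power2_eq_square algebra_simps)
      have "(g+1) * x^2 < 8 * k^2" using A B C by (simp add: power2_eq_square)
      hence "((g+1) * x^2)^2 < (8 * k^2)^2" using g1 by (intro power_strict_mono) auto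
      hence "(g+1)^2 * x^4 < 64 * k^4" by (simp add: power_mult_distrib power_mult[symmetric])
      moreover have "v * x^4 \<le> (g+1)^2 * x^4" using vg1 by (simp add: mult_right_mono)
      ultimately have "v * x^4 < 64 * k^4" by linarith
      hence "v * x^4 * x^2 < 64 * k^4 * x^2" using x0 by simp
      also have "\<dots> \<le> 64 * k^4 * k^2" using xk x0 by (intro mult_left_mono power_mono) auto
      finally show ?thesis by (simp add: power_add[symmetric] algebra_simps)
    qed
  qed
qed



definition adj :: "('n \<Rightarrow> 'n \<Rightarrow> bool) \<Rightarrow> 'n \<Rightarrow> 'n \<Rightarrow> real" where
  "adj E i j = (if E i j then 1 else 0)"

definition Aop :: "('n::finite \<Rightarrow> 'n \<Rightarrow> bool) \<Rightarrow> ('n \<Rightarrow> real) \<Rightarrow> 'n \<Rightarrow> real" where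
  "Aop E w i = (\<Sum>j\<in>UNIV. adj E i j * w j)"

lemma srg_sym: "strongly_regular E v k l m \<Longrightarrow> E x y \<Longrightarrow> E y x"
  by (auto simp: strongly_regular_def simple_graph_def)

lemma srg_irrefl: "strongly_regular E v k l m \<Longrightarrow> \<not> E x x"
  by (auto simp: strongly_regular_def simple_graph_def)

lemma sum_indicator_card:
  fixes A :: "'n::finite set"
  shows "(\<Sum>z\<in>UNIV. if z \<in> A then 1 else 0) = real (card A)"
  by (simp add: sum.If_cases)

lemma srg_deg:
  assumes "strongly_regular E v k l m"
  shows "(\<Sum>z\<in>UNIV. adj E i z) = real k"
proof -
  have "(\<Sum>z\<in>UNIV. adj E i z) = (\<Sum>z\<in>UNIV. if z \<in> nbrs E i then 1 else 0)"
    by (simp add: adj_def nbrs_def)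
  also have "\<dots> = real (card (nbrs E i))" by (rule sum_indicator_card)
  finally show ?thesis using assms by (simp add: strongly_regular_def)
qed

lemma srg_deg':
  assumes "strongly_regular E v k l m"
  shows "(\<Sum>z\<in>UNIV. adj E z i) = real k"
proof -
  have "(\<Sum>z\<in>UNIV. adj E z i) = (\<Sum>z\<in>UNIV. adj E i z)"
    using srg_sym[OF assms] by (intro sum.cong) (auto simp: adj_def)
  thus ?thesis using srg_deg[OF assms] by simp
qed

lemma srg_sum2:
  assumes sr: "strongly_regular E v k l m"
  shows "(\<Sum>z\<in>UNIV. adj E i z * adj E z j) =
     real m + (real k - real m) * (if i = j then 1 else 0) + (real l - real m) * adj E i j"
proof -
  have "(\<Sum>z\<in>UNIV. adj E i z * adj E z j) = (\<Sum>z\<in>UNIV. if z \<in> nbrs E i \<inter> nbrs E j then 1 else 0)"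
    using srg_sym[OF sr] by (intro sum.cong) (auto simp: adj_def nbrs_def)
  also have "\<dots> = real (card (nbrs E i \<inter> nbrs E j))" by (rule sum_indicator_card)
  finally have *: "(\<Sum>z\<in>UNIV. adj E i z * adj E z j) = real (card (nbrs E i \<inter> nbrs E j))" .
  show ?thesis
  proof (cases "i = j")
    case True
    thus ?thesis using * sr srg_irrefl[OF sr, of i] by (simp add: strongly_regular_def adj_def)
  next
    case False
    show ?thesis
    proof (cases "E i j")
      case True
      thus ?thesis using * sr \<open>i \<noteq> j\<close> by (simp add: strongly_regular_def adj_def)
    next
      case F: False
      thus ?thesis using * sr \<open>i \<noteq> j\<close> by (simp add: strongly_regular_def adj_def)
    qed
  qed
qed

lemma sum_delta_mult: "(\<Sum>z\<in>(UNIV::'n::finite set). (if i = z then 1 else 0) * (w z::real)) = w i"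
proof -
  have "(\<lambda>z. (if i = z then 1 else 0) * w z) = (\<lambda>z. if i = z then w z else 0)" by auto
  thus ?thesis by (simp only:) simp
qed

lemma Aop_AA:
  assumes sr: "strongly_regular E v k l m"
  shows "Aop E (Aop E w) i = (real k - real m) * w i + (real l - real m) * Aop E w i
           + real m * (\<Sum>z\<in>UNIV. w z)"
proof -
  have "Aop E (Aop E w) i = (\<Sum>j\<in>UNIV. \<Sum>z\<in>UNIV. adj E i j * (adj E j z * w z))"
    by (simp add: Aop_def sum_distrib_left)
  also have "\<dots> = (\<Sum>z\<in>UNIV. \<Sum>j\<in>UNIV. adj E i j * adj E j z * w z)"
    by (subst sum.swap) (simp add: mult.assoc)
  also have "\<dots> = (\<Sum>z\<in>UNIV. (\<Sum>j\<in>UNIV. adj E i j * adj E j z) * w z)"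
    by (simp add: sum_distrib_right)
  also have "\<dots> = (\<Sum>z\<in>UNIV. real m * w z + (real k - real m) * ((if i = z then 1 else 0) * w z)
       + (real l - real m) * (adj E i z * w z))"
    by (intro sum.cong refl, subst srg_sum2[OF sr]) (simp add: algebra_simps)
  also have "\<dots> = real m * (\<Sum>z\<in>UNIV. w z) + (real k - real m) * w i + (real l - real m) * Aop E w i"
    by (simp add: sum.distrib sum_distrib_left[symmetric] Aop_def sum_delta_mult)
  finally show ?thesis by simp
qed

lemma Aop_colsum:
  assumes sr: "strongly_regular E v k l m"
  shows "(\<Sum>i\<in>UNIV. Aop E w i) = real k * (\<Sum>z\<in>UNIV. w z)"
proof -
  have "(\<Sum>i\<in>UNIV. Aop E w i) = (\<Sum>j\<in>UNIV. (\<Sum>i\<in>UNIV. adj E i j) * w j)"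
    unfolding Aop_def by (subst sum.swap) (simp add: sum_distrib_right)
  also have "\<dots> = (\<Sum>j\<in>UNIV. real k * w j)" by (simp add: srg_deg'[OF sr])
  finally show ?thesis by (simp add: sum_distrib_left)
qed

lemma Aop_scale: "Aop E (\<lambda>i. t * w i) = (\<lambda>i. t * Aop E w i)"
  by (auto simp: Aop_def sum_distrib_left algebra_simps)

lemma eig_cases:
  assumes sr: "strongly_regular E v k l m"
    and ev: "Aop E w = (\<lambda>i. t * w i)" and nz: "w i0 \<noteq> 0"
  shows "t = real k \<or> t^2 = (real k - real m) + (real l - real m) * t"
proof (cases "t = real k")
  case False
  have "t * (\<Sum>z\<in>UNIV. w z) = real k * (\<Sum>z\<in>UNIV. w z)"
    using Aop_colsum[OF sr, of w] ev by (simp add: sum_distrib_left)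
  hence S0: "(\<Sum>z\<in>UNIV. w z) = 0" using False by simp
  have "Aop E (Aop E w) i0 = t * t * w i0"
    using ev by (simp add: Aop_scale)
  moreover have "Aop E (Aop E w) i0 = (real k - real m) * w i0 + (real l - real m) * (t * w i0)"
    using Aop_AA[OF sr, of w i0] S0 ev by simp
  ultimately have "(t * t) * w i0 = ((real k - real m) + (real l - real m) * t) * w i0"
    by (simp add: algebra_simps)
  hence "t * t = (real k - real m) + (real l - real m) * t" using nz by simp
  thus ?thesis by (simp add: power2_eq_square)
qed simp



lemma srg_finite_nbrs: "finite (nbrs E (x::'n::finite))" by simp

lemma mu_pos:
  assumes pr: "primitive_srg E v k l m"
  shows "m \<ge> 1"
proof (rule ccontr)
  assume "\<not> m \<ge> 1"
  hence m0: "m = 0" by simp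
  have sr: "strongly_regular E v k l m" using pr by (simp add: primitive_srg_def)
  have con: "\<And>x y. E\<^sup>*\<^sup>* x y" using pr by (simp add: primitive_srg_def connected_graph_def)
  obtain a b where ab: "a \<noteq> b" "\<not> E a b" using sr by (auto simp: strongly_regular_def)
  have stp: "z = a \<or> E a z" if "y = a \<or> E a y" "E y z" for y z
  proof (rule ccontr)
    assume nz: "\<not> (z = a \<or> E a z)"
    hence "a \<noteq> z" "\<not> E a z" by auto
    hence "card (nbrs E a \<inter> nbrs E z) = m" using sr by (simp add: strongly_regular_def)
    hence "card (nbrs E a \<inter> nbrs E z) = 0" using m0 by simp
    hence "nbrs E a \<inter> nbrs E z = {}" by simp
    moreover have "y \<noteq> a" using that nz by auto
    hence "E a y" using that by simp
    moreover have "E z y" using srg_sym[OF sr \<open>E y z\<close>] .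
    ultimately show False by (auto simp: nbrs_def)
  qed
  have "E\<^sup>*\<^sup>* a b \<Longrightarrow> b = a \<or> E a b"
  proof (induction rule: rtranclp_induct)
    case base thus ?case by simp
  next
    case (step y z) thus ?case using stp by blast
  qed
  thus False using con ab by blast
qed

lemma mu_le_k:
  assumes sr: "strongly_regular E v k l m"
  shows "m \<le> k"
proof -
  obtain a b where ab: "a \<noteq> b" "\<not> E a b" using sr by (auto simp: strongly_regular_def)
  hence "m = card (nbrs E a \<inter> nbrs E b)" using sr by (simp add: strongly_regular_def)
  also have "\<dots> \<le> card (nbrs E a)" by (intro card_mono) auto
  finally show ?thesis using sr by (simp add: strongly_regular_def)
qed

lemma mu_lt:
  assumes pr: "primitive_srg E v k l m"
  shows "m < k"
proof (rule ccontr)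
  assume "\<not> m < k"
  have sr: "strongly_regular E v k l m" using pr by (simp add: primitive_srg_def)
  hence mk: "m = k" using mu_le_k \<open>\<not> m < k\<close> by force
  have con: "\<And>x y. (complement_graph E)\<^sup>*\<^sup>* x y" using pr by (simp add: primitive_srg_def connected_graph_def)
  have same: "nbrs E y \<subseteq> nbrs E z" if "y \<noteq> z" "\<not> E y z" for y z
  proof -
    have "card (nbrs E y \<inter> nbrs E z) = card (nbrs E y)" using sr that mk by (simp add: strongly_regular_def)
    hence "nbrs E y \<inter> nbrs E z = nbrs E y" by (intro card_subset_eq) auto
    thus ?thesis by blast
  qed
  have same2: "nbrs E y = nbrs E z" if "complement_graph E y z" for y z
  proof -
    have "y \<noteq> z" "\<not> E y z" using that by (auto simp: complement_graph_def)
    moreover have "\<not> E z y" using srg_sym[OF sr] \<open>\<not> E y z\<close> by blast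
    ultimately show ?thesis using same[of y z] same[of z y] by auto
  qed
  obtain a b where ab: "E a b" using sr by (auto simp: strongly_regular_def)
  have "(complement_graph E)\<^sup>*\<^sup>* a b \<Longrightarrow> nbrs E b = nbrs E a"
  proof (induction rule: rtranclp_induct)
    case base thus ?case by simp
  next
    case (step y z) thus ?case using same2 by metis
  qed
  hence "nbrs E b = nbrs E a" using con by blast
  hence "b \<in> nbrs E b" using ab by (simp add: nbrs_def)
  thus False using srg_irrefl[OF sr] by (simp add: nbrs_def)
qed

lemma k_pos:
  assumes sr: "strongly_regular E v k l m"
  shows "k \<ge> 1"
proof -
  obtain a b where ab: "E a b" using sr by (auto simp: strongly_regular_def)
  hence "nbrs E a \<noteq> {}" by (auto simp: nbrs_def)
  hence "card (nbrs E a) \<noteq> 0" by simp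
  moreover have "card (nbrs E a) = k" using sr by (simp add: strongly_regular_def)
  ultimately show ?thesis by simp
qed

lemma v_ge:
  assumes sr: "strongly_regular E v k l m"
  shows "k + 2 \<le> v"
proof -
  obtain a b where ab: "a \<noteq> b" "\<not> E a b" using sr by (auto simp: strongly_regular_def)
  have "a \<notin> nbrs E a" using srg_irrefl[OF sr] by (simp add: nbrs_def)
  moreover have "b \<notin> nbrs E a" using ab by (simp add: nbrs_def)
  ultimately have "card (insert a (insert b (nbrs E a))) = k + 2"
    using ab sr by (simp add: strongly_regular_def)
  moreover have "card (insert a (insert b (nbrs E a))) \<le> CARD('a)" by (rule card_mono) auto
  ultimately show ?thesis using sr by (simp add: strongly_regular_def)
qed

lemma count_id:
  assumes sr: "strongly_regular E v k l m"
  shows "(real k)^2 = real k + real l * real k + real m * (real v - 1 - real k)"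
proof -
  obtain i :: 'a where True by simp
  have one: "Aop E (\<lambda>_. 1) = (\<lambda>_. real k)" using srg_deg[OF sr] by (auto simp: Aop_def)
  have "Aop E (Aop E (\<lambda>_. 1)) i = real k * real k"
    by (simp add: one Aop_def sum_distrib_right[symmetric] srg_deg[OF sr])
  moreover have "Aop E (Aop E (\<lambda>_. 1)) i = (real k - real m) + (real l - real m) * real k + real m * real v"
    using Aop_AA[OF sr, of "\<lambda>_. 1" i] sr by (simp add: one strongly_regular_def)
  ultimately show ?thesis by (simp add: power2_eq_square algebra_simps)
qed

lemma eig_construct:
  assumes sr: "strongly_regular E v k l m"
    and pq: "p + q = real l - real m" "p * q = real m - real k" and p0: "p \<noteq> 0"
  shows "\<exists>w i0. w i0 \<noteq> 0 \<and> Aop E w = (\<lambda>i. q * w i)"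
proof -
  obtain a b where ab: "a \<noteq> b" "\<not> E a b" using sr by (auto simp: strongly_regular_def)
  define z where "z i = (if i = a then 1 else 0) - (if i = b then 1 else (0::real))" for i
  define y where "y i = Aop E z i - p * z i" for i
  have Sz: "(\<Sum>i\<in>UNIV. z i) = 0" by (simp add: z_def sum_subtractf)
  have Az: "Aop E z i = adj E i a - adj E i b" for i
  proof -
    have eq: "(\<lambda>j. adj E i j * z j) = (\<lambda>j. (if a = j then 1 else 0) * adj E i j - (if b = j then 1 else 0) * adj E i j)"
      by (auto simp: z_def)
    show ?thesis unfolding Aop_def eq by (simp add: sum_subtractf sum_delta_mult)
  qed
  have ya: "y a = - p" using ab srg_irrefl[OF sr, of a] by (simp add: y_def Az adj_def z_def)
  have Ay: "Aop E y = (\<lambda>i. q * y i)"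
  proof
    fix i
    have lin: "Aop E y i = Aop E (Aop E z) i - p * Aop E z i"
      by (simp add: y_def Aop_def right_diff_distrib sum_subtractf sum_distrib_left algebra_simps)
    also have "\<dots> = (real k - real m) * z i + (real l - real m) * Aop E z i - p * Aop E z i"
      using Aop_AA[OF sr, of z i] Sz by simp
    also have "\<dots> = -(p*q) * z i + (p + q) * Aop E z i - p * Aop E z i"
    proof -
      have e1: "real k - real m = - (p*q)" using pq by simp
      have e2: "real l - real m = p + q" using pq by simp
      show ?thesis by (subst e1, subst e2) (rule refl)
    qed
    also have "\<dots> = q * y i" by (simp add: y_def algebra_simps)
    finally show "Aop E y i = q * y i" .
  qed
  show ?thesis using ya p0 Ay by (intro exI[of _ y] exI[of _ a]) simp
qed

lemma mat_Aop: "(adj_matrix E *v x) $ i = Aop E (\<lambda>j. x $ j) i"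
  by (simp add: adj_matrix_def matrix_vector_mult_def Aop_def adj_def)

lemma is_eig_iff:
  "is_eigenvalue (adj_matrix E) t \<longleftrightarrow> (\<exists>w i0. w i0 \<noteq> 0 \<and> Aop E w = (\<lambda>i. t * w i))"
proof
  assume "is_eigenvalue (adj_matrix E) t"
  then obtain x where x: "x \<noteq> 0" "adj_matrix E *v x = t *\<^sub>R x" by (auto simp: is_eigenvalue_def)
  then obtain i0 where "x $ i0 \<noteq> 0" by (auto simp: vec_eq_iff)
  moreover have "Aop E (\<lambda>j. x $ j) = (\<lambda>i. t * x $ i)"
    using x(2) by (auto simp: vec_eq_iff mat_Aop[symmetric])
  ultimately show "\<exists>w i0. w i0 \<noteq> 0 \<and> Aop E w = (\<lambda>i. t * w i)" by blast
next
  assume "\<exists>w i0. w i0 \<noteq> 0 \<and> Aop E w = (\<lambda>i. t * w i)"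
  then obtain w i0 where w: "w i0 \<noteq> 0" "Aop E w = (\<lambda>i. t * w i)" by blast
  define x where "x = (\<chi> i. w i)"
  have "x \<noteq> 0" using w(1) by (auto simp: x_def vec_eq_iff)
  moreover have "adj_matrix E *v x = t *\<^sub>R x"
    using w(2) by (simp add: vec_eq_iff mat_Aop x_def)
  ultimately show "is_eigenvalue (adj_matrix E) t" by (auto simp: is_eigenvalue_def)
qed



lemma gram_bound:
  fixes P :: "'n::finite \<Rightarrow> 'n \<Rightarrow> real"
  assumes sym: "\<And>i j. P i j = P j i"
    and idem: "\<And>i j. (\<Sum>z\<in>UNIV. P i z * P z j) = P i j"
    and off: "\<And>i j. i \<noteq> j \<Longrightarrow> (P i j - c1) * (P i j - c2) = 0"
    and diag: "\<And>i. (P i i - c1) * (P i i - c2) \<noteq> 0"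
  shows "real CARD('n) \<le> (\<Sum>i\<in>UNIV. P i i)^2 + (\<Sum>i\<in>UNIV. P i i) + 1"
proof -
  define p where "p i = (\<chi> j. P j i)" for i
  have pp: "p i \<bullet> p j = P i j" for i j
  proof -
    have "p i \<bullet> p j = (\<Sum>z\<in>UNIV. P z i * P z j)" by (simp add: p_def inner_vec_def)
    also have "\<dots> = (\<Sum>z\<in>UNIV. P i z * P z j)" using sym by (intro sum.cong) auto
    finally show ?thesis using idem by simp
  qed
  define W where "W = span (range p)"
  obtain B where B: "B \<subseteq> W" "pairwise orthogonal B" "\<And>x. x \<in> B \<Longrightarrow> norm x = 1"
    "independent B" "span B = W"
    using orthonormal_basis_subspace[OF subspace_span, of "range p"] unfolding W_def by metis
  have finB: "finite B" using B(4) by (rule finiteI_independent)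
  have orth: "b \<bullet> b' = (if b = b' then 1 else 0)" if "b \<in> B" "b' \<in> B" for b b'
  proof (cases "b = b'")
    case True thus ?thesis using B(3) that by (simp add: norm_eq_1)
  next
    case False thus ?thesis using B(2) that by (auto simp: pairwise_def orthogonal_def)
  qed
  have expand: "y = (\<Sum>b\<in>B. (y \<bullet> b) *\<^sub>R b)" if yB: "y \<in> span B" for y
  proof -
    obtain u where u: "y = (\<Sum>b\<in>B. u b *\<^sub>R b)" using yB span_finite[OF finB] by auto
    have "y \<bullet> b' = u b'" if "b' \<in> B" for b'
    proof -
      have "y \<bullet> b' = (\<Sum>b\<in>B. u b * (b \<bullet> b'))" by (simp add: u inner_sum_left)
      also have "\<dots> = (\<Sum>b\<in>B. if b = b' then u b else 0)"
        using orth that by (intro sum.cong) auto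
      also have "\<dots> = u b'" using finB that by simp
      finally show ?thesis .
    qed
    thus ?thesis using u by (metis (no_types, lifting) sum.cong)
  qed
  have coord: "p i \<bullet> y = y $ i" if "y \<in> W" for i y
  proof -
    have "y \<in> span (range p)" using that by (simp add: W_def)
    thus ?thesis
    proof (induction rule: span_induct)
      case base
      show ?case
        by (auto simp: subspace_def inner_add_right)
    next
      case (step x)
      then obtain j where "x = p j" by auto
      thus ?case by (simp add: pp) (simp add: p_def sym)
    qed
  qed
  have PB: "P i j = (\<Sum>b\<in>B. b $ i * b $ j)" for i j
  proof -
    have piW: "p i \<in> span B" using B(5) by (simp add: W_def span_base)
    have "P i j = p i \<bullet> p j" by (simp add: pp)
    also have "\<dots> = (\<Sum>b\<in>B. (p i \<bullet> b) * (b \<bullet> p j))"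
      by (subst expand[OF piW]) (simp add: inner_sum_left)
    also have "\<dots> = (\<Sum>b\<in>B. b $ i * b $ j)"
      using B(1) coord by (intro sum.cong refl) (auto simp: inner_commute)
    finally show ?thesis .
  qed
  have tr: "(\<Sum>i\<in>UNIV. P i i) = real (card B)"
  proof -
    have "(\<Sum>i\<in>UNIV. P i i) = (\<Sum>b\<in>B. \<Sum>i\<in>UNIV. b $ i * b $ i)"
      by (simp add: PB) (rule sum.swap)
    also have "\<dots> = (\<Sum>b\<in>B. b \<bullet> b)" by (simp add: inner_vec_def)
    also have "\<dots> = (\<Sum>b\<in>B. 1)" using orth by (intro sum.cong) auto
    finally show ?thesis by simp
  qed
  define T where "T = (\<lambda>q. \<chi> i. fst q $ i * snd q $ i) ` (B \<times> B) \<union> B \<union> {\<chi> i. 1}"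
  have finT: "finite T" using finB by (simp add: T_def)
  have cardT: "card T \<le> card B * card B + card B + 1"
  proof -
    have "card T \<le> card ((\<lambda>q. \<chi> i. fst q $ i * snd q $ i) ` (B \<times> B) \<union> B) + card {(\<chi> i. 1)::real^'n}"
      unfolding T_def by (rule card_Un_le)
    also have "\<dots> \<le> card ((\<lambda>q. \<chi> i. fst q $ i * snd q $ i) ` (B \<times> B)) + card B + 1"
      using card_Un_le by simp
    also have "\<dots> \<le> card (B \<times> B) + card B + 1" using card_image_le[of "B \<times> B"] finB by (simp add: card_cartesian_product)
    finally show ?thesis by (simp add: card_cartesian_product)
  qed
  have axT: "axis j 1 \<in> span T" for j
  proof -
    define M where "M = (P j j - c1) * (P j j - c2)"
    define Y where "Y = (\<chi> i. (P i j - c1) * (P i j - c2))"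
    have Y1: "Y = M *\<^sub>R axis j 1"
      using off by (auto simp: vec_eq_iff Y_def M_def axis_def)
    have Y2: "Y = ((\<Sum>q\<in>B \<times> B. (fst q $ j * snd q $ j) *\<^sub>R (\<chi> i. fst q $ i * snd q $ i))
             - (c1 + c2) *\<^sub>R (\<Sum>b\<in>B. (b $ j) *\<^sub>R b) + (c1 * c2) *\<^sub>R (\<chi> i. 1))"
    proof (subst vec_eq_iff, intro allI)
      fix i
      have sq: "(P i j)^2 = (\<Sum>q\<in>B \<times> B. (fst q $ j * snd q $ j) * (fst q $ i * snd q $ i))"
        by (simp add: PB power2_eq_square sum_product sum.cartesian_product algebra_simps case_prod_beta)
      have lin: "(\<Sum>b\<in>B. b $ j * b $ i) = P i j" by (simp add: PB mult.commute)
      have "Y $ i = (P i j)^2 - (c1+c2) * P i j + c1*c2" by (simp add: Y_def algebra_simps power2_eq_square)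
      also have "\<dots> = ((\<Sum>q\<in>B \<times> B. (fst q $ j * snd q $ j) *\<^sub>R (\<chi> i. fst q $ i * snd q $ i))
             - (c1 + c2) *\<^sub>R (\<Sum>b\<in>B. (b $ j) *\<^sub>R b) + (c1 * c2) *\<^sub>R (\<chi> i. 1)) $ i"
        by (simp add: sq lin)
      finally show "Y $ i = ((\<Sum>q\<in>B \<times> B. (fst q $ j * snd q $ j) *\<^sub>R (\<chi> i. fst q $ i * snd q $ i))
             - (c1 + c2) *\<^sub>R (\<Sum>b\<in>B. (b $ j) *\<^sub>R b) + (c1 * c2) *\<^sub>R (\<chi> i. 1)) $ i" .
    qed
    have "Y \<in> span T"
      unfolding Y2 T_def
      by (intro span_add span_diff span_mul span_sum span_base) auto
    moreover have "M \<noteq> 0" using diag by (simp add: M_def)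
    ultimately have "(1/M) *\<^sub>R Y \<in> span T" by (intro span_mul)
    thus ?thesis using \<open>M \<noteq> 0\<close> by (simp add: Y1)
  qed
  have "Basis \<subseteq> span T"
  proof
    fix x :: "real^'n" assume "x \<in> Basis"
    then obtain j where "x = axis j 1" by (auto simp: Basis_vec_def)
    thus "x \<in> span T" using axT by simp
  qed
  hence "card (Basis :: (real^'n) set) \<le> card T"
    using independent_span_bound[OF finT independent_Basis] by blast
  hence "CARD('n) \<le> card B * card B + card B + 1" using cardT by simp
  hence "real CARD('n) \<le> real (card B) * real (card B) + real (card B) + 1"
    by (metis of_nat_add of_nat_le_iff of_nat_mult of_nat_1)
  thus ?thesis by (simp add: tr power2_eq_square)
qed



lemma sum_delta_c: "(\<Sum>z\<in>(UNIV::'n::finite set). (r::real) * (if z = j then 1 else 0)) = r"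
proof -
  have "(\<lambda>z. r * (if z = j then 1 else 0)) = (\<lambda>z. if z = j then r else 0)" by auto
  thus ?thesis by (simp only:) simp
qed

lemma Q_idem:
  assumes sr: "strongly_regular E v k l m"
    and vpos: "real v > 0"
    and rx: "r * x = real k - real m" and rmx: "r - x = real l - real m"
    and cdef: "c = (real k - r) / real v"
    and cnt: "(real k)^2 = real k + real l * real k + real m * (real v - 1 - real k)"
  shows "(\<Sum>z\<in>UNIV. (r * (if i = z then 1 else 0) + c - adj E i z) * (r * (if z = j then 1 else 0) + c - adj E z j))
       = (r + x) * (r * (if i = j then 1 else 0) + c - adj E i j)"
proof -
  define Q where "Q i j = r * (if i = j then 1 else 0) + c - adj E i j" for i j
  have vc: "real v * c = real k - r" using vpos cdef by simp
  have mc: "c * (x + real k) = real m"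
  proof -
    have "real v * (c * (x + real k)) = (real k - r) * (x + real k)" using vc by simp
    also have "\<dots> = real v * real m" using cnt rx rmx by (simp add: power2_eq_square) algebra
    finally show ?thesis using vpos by simp
  qed
  have colQ: "(\<Sum>z\<in>UNIV. Q z j) = r + real v * c - real k"
  proof -
    have "(\<Sum>z\<in>UNIV. Q z j) = r * (\<Sum>z\<in>UNIV. (if z = j then 1 else 0)) + (\<Sum>z\<in>(UNIV::'a set). c) - (\<Sum>z\<in>UNIV. adj E z j)"
      by (simp add: Q_def sum.distrib sum_subtractf sum_distrib_left sum_delta_c)
    also have "\<dots> = r + real v * c - real k"
      using sr by (simp add: srg_deg'[OF sr] strongly_regular_def)
    finally show ?thesis .
  qed
  have aQ: "(\<Sum>z\<in>UNIV. adj E i z * Q z j) = r * adj E i j + c * real k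
        - (real m + (real k - real m) * (if i = j then 1 else 0) + (real l - real m) * adj E i j)"
  proof -
    have "(\<Sum>z\<in>UNIV. adj E i z * Q z j) = r * (\<Sum>z\<in>UNIV. (if j = z then 1 else 0) * adj E i z)
        + c * (\<Sum>z\<in>UNIV. adj E i z) - (\<Sum>z\<in>UNIV. adj E i z * adj E z j)"
      by (simp add: Q_def sum.distrib sum_subtractf sum_distrib_left algebra_simps) (rule sum.cong, auto)
    also have "\<dots> = r * adj E i j + c * real k
        - (real m + (real k - real m) * (if i = j then 1 else 0) + (real l - real m) * adj E i j)"
      by (simp only: sum_delta_mult srg_deg[OF sr] srg_sum2[OF sr])
    finally show ?thesis .
  qed
  have "(\<Sum>z\<in>UNIV. Q i z * Q z j) = r * (\<Sum>z\<in>UNIV. (if i = z then 1 else 0) * Q z j)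
      + c * (\<Sum>z\<in>UNIV. Q z j) - (\<Sum>z\<in>UNIV. adj E i z * Q z j)"
    by (simp add: Q_def[of i] sum.distrib sum_subtractf sum_distrib_left algebra_simps)
  also have "\<dots> = r * Q i j + c * (r + real v * c - real k) - (r * adj E i j + c * real k
        - (real m + (real k - real m) * (if i = j then 1 else 0) + (real l - real m) * adj E i j))"
    by (simp only: sum_delta_mult colQ aQ)
  also have "\<dots> = (r + x) * Q i j"
  proof -
    have e3: "c * (r + real v * c - real k) = 0" using vc by simp
    have alg: "r * (r * d + c - a) + 0 - (r * a + c * real k - (real m + (real k - real m) * d + (real l - real m) * a))
        = (r + x) * (r * d + c - a)" for d a
    proof -
      have h1: "real k - real m = r * x" using rx by simp
      have h2: "real l - real m = r - x" using rmx by simp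
      have h3: "real m = c * (x + real k)" using mc by simp
      show ?thesis unfolding h1 h2 by (subst h3) (simp add: algebra_simps)
    qed
    show ?thesis unfolding Q_def by (simp only: e3 alg)
  qed
  finally show ?thesis by (simp add: Q_def)
qed



theorem lemma1p5:
  fixes E :: "'n::finite \<Rightarrow> 'n \<Rightarrow> bool" and v k l m :: nat and s :: real
  assumes "primitive_srg E v k l m"
    and "smallest_eigenvalue (adj_matrix E) s"
  shows "real k / \<bar>s\<bar> > real v powr (1/6) / 2"
proof -
  have pr: "primitive_srg E v k l m" by fact
  have sr: "strongly_regular E v k l m" using pr by (simp add: primitive_srg_def)
  have se: "is_eigenvalue (adj_matrix E) s" "\<And>t. is_eigenvalue (adj_matrix E) t \<Longrightarrow> s \<le> t"
    using assms(2) by (auto simp: smallest_eigenvalue_def)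
  have k1: "real k \<ge> 1" using k_pos[OF sr] by simp
  have m1: "real m \<ge> 1" using mu_pos[OF pr] by simp
  have mk: "real m < real k" using mu_lt[OF pr] by simp
  have vk: "real v \<ge> real k + 2" using v_ge[OF sr] by simp
  have cnt: "(real k)^2 = real k + real l * real k + real m * (real v - 1 - real k)"
    using count_id[OF sr] .
  have vint: "real v \<ge> 6 * real k + 2 \<or> real v \<le> 6 * real k + 1"
  proof -
    have "v \<ge> 6 * k + 2 \<or> v \<le> 6 * k + 1" by arith
    thus ?thesis
    proof
      assume "v \<ge> 6 * k + 2"
      hence "real (6 * k + 2) \<le> real v" by (simp only: of_nat_le_iff)
      thus ?thesis by simp
    next
      assume "v \<le> 6 * k + 1"
      hence "real v \<le> real (6 * k + 1)" by (simp only: of_nat_le_iff)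
      thus ?thesis by simp
    qed
  qed
  define b where "b = real l - real m"
  define D where "D = b^2 + 4 * (real k - real m)"
  have Db: "D > b^2" using mk by (simp add: D_def)
  have sqD: "sqrt D > \<bar>b\<bar>"
  proof -
    have "sqrt (b^2) < sqrt D" using Db by (simp only: real_sqrt_less_iff)
    thus ?thesis by simp
  qed
  define t1 where "t1 = (b + sqrt D) / 2"
  define t2 where "t2 = (b - sqrt D) / 2"
  have t1pos: "t1 > 0" using sqD by (simp add: t1_def abs_less_iff)
  have t2neg: "t2 < 0" using sqD by (simp add: t2_def abs_less_iff)
  have D0: "D \<ge> 0" using Db zero_le_power2[of b] by linarith
  have sum12: "t1 + t2 = real l - real m" by (simp add: t1_def t2_def b_def field_simps)
  have prod12: "t1 * t2 = real m - real k"
  proof -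
    have "t1 * t2 = (b^2 - (sqrt D)^2) / 4" by (simp add: t1_def t2_def power2_eq_square algebra_simps)
    also have "\<dots> = real m - real k" using D0 by (simp add: D_def)
    finally show ?thesis .
  qed
  have "is_eigenvalue (adj_matrix E) t2"
    using eig_construct[OF sr sum12 prod12] t1pos by (simp add: is_eig_iff)
  hence st2: "s \<le> t2" using se(2) by blast
  hence sneg: "s < 0" using t2neg by simp
  obtain w i0 where w: "w i0 \<noteq> 0" "Aop E w = (\<lambda>i. s * w i)" using se(1) by (auto simp: is_eig_iff)
  have "s = real k \<or> s^2 = (real k - real m) + (real l - real m) * s"
    using eig_cases[OF sr w(2) w(1)] .
  hence sq: "s^2 = (real k - real m) + (real l - real m) * s" using sneg k1 by auto
  define x where "x = - s"
  define r where "r = (real l - real m) + x"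
  have x0: "x > 0" using sneg by (simp add: x_def)
  have rx: "r * x = real k - real m" using sq by (simp add: r_def x_def power2_eq_square algebra_simps)
  have rmx: "r - x = real l - real m" by (simp add: r_def)
  have r0: "r > 0"
  proof -
    have "r * x > 0" using rx mk by simp
    thus ?thesis using x0 by (simp add: zero_less_mult_iff)
  qed
  define c where "c = (real k - r) / real v"
  define d where "d = r + x"
  have d0: "d > 0" using r0 x0 by (simp add: d_def)
  have vpos: "real v > 0" using vk k1 by simp
  define P where "P i j = (r * (if i = j then 1 else 0) + c - adj E i j) / d" for i j
  have Psym: "P i j = P j i" for i j using srg_sym[OF sr] by (auto simp: P_def adj_def)
  have Pidem: "(\<Sum>z\<in>UNIV. P i z * P z j) = P i j" for i j
  proof -
    have "(\<Sum>z\<in>UNIV. P i z * P z j) = (\<Sum>z\<in>UNIV. (r * (if i = z then 1 else 0) + c - adj E i z) * (r * (if z = j then 1 else 0) + c - adj E z j)) / (d * d)"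
      by (simp add: P_def sum_divide_distrib)
    also have "\<dots> = (r + x) * (r * (if i = j then 1 else 0) + c - adj E i j) / (d * d)"
      by (subst Q_idem[OF sr vpos rx rmx c_def cnt]) simp
    also have "\<dots> = P i j" using d0 by (simp add: P_def d_def)
    finally show ?thesis .
  qed
  define c1 where "c1 = (c - 1) / d"
  define c2 where "c2 = c / d"
  have Poff: "(P i j - c1) * (P i j - c2) = 0" if "i \<noteq> j" for i j
    using that by (auto simp: P_def c1_def c2_def adj_def)
  have Pdiag: "(P i i - c1) * (P i i - c2) \<noteq> 0" for i
  proof -
    have "P i i - c1 = (r + 1) / d" using srg_irrefl[OF sr, of i] d0 by (simp add: P_def c1_def adj_def) (simp add: field_simps)
    moreover have "P i i - c2 = r / d" using srg_irrefl[OF sr, of i] d0 by (simp add: P_def c2_def adj_def) (simp add: field_simps)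
    ultimately show ?thesis using r0 d0 by simp
  qed
  define g where "g = (\<Sum>i\<in>UNIV. P i i)"
  have gb: "real CARD('n) \<le> g^2 + g + 1" unfolding g_def
    by (rule gram_bound[OF Psym Pidem Poff Pdiag])
  have card: "CARD('n) = v" using sr by (simp add: strongly_regular_def)
  have vg: "real v \<le> g^2 + g + 1" using gb card by simp
  have gdef: "g * (r + x) = real k + (real v - 1) * r"
  proof -
    have "g = real v * ((r + c) / d)"
      using srg_irrefl[OF sr] card by (simp add: g_def P_def adj_def)
    hence "g * (r + x) = real v * (r + c)" using d0 by (simp add: d_def)
    also have "\<dots> = real v * r + real v * c" by (simp add: algebra_simps)
    also have "real v * c = real k - r" using vpos by (simp add: c_def)
    finally have "g * (r + x) = real v * r + (real k - r)" .
    thus ?thesis by (simp add: algebra_simps)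
  qed
  have l0: "real l \<ge> 0" by simp
  have main: "64 * (real k)^6 > real v * x^6"
    by (rule final_ineq[OF k1 m1 l0 x0 r0 rx rmx cnt gdef vg vk vint])
  have abss: "\<bar>s\<bar> = x" using sneg by (simp add: x_def)
  define y where "y = real v powr (1/6)"
  have y0: "y \<ge> 0" by (simp add: y_def)
  have y6: "y^6 = real v"
  proof -
    have "y^6 = y powr (real 6)" using vpos by (simp add: y_def powr_realpow)
    also have "\<dots> = real v" using vpos by (simp add: y_def powr_powr)
    finally show ?thesis .
  qed
  have "y^6 < (2 * real k / x)^6"
  proof -
    have "(2 * real k / x)^6 = 64 * (real k)^6 / x^6" by (simp add: power_divide power_mult_distrib)
    moreover have "real v < 64 * (real k)^6 / x^6" using main x0 by (simp add: field_simps)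
    ultimately show ?thesis using y6 by simp
  qed
  hence "y < 2 * real k / x" by (rule power_less_imp_less_base) (use k1 x0 in simp)
  thus ?thesis using abss by (simp add: y_def field_simps)
qed


end
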